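(* Let $G=(V,E)$ be a simple undirected graph with $m=|E|$, $b:V\to\mathbb{Z}_{\ge0}$ with $\beta=\max_v b(v)$, and $f:2^E\to\mathbb{R}_{\ge0}$ a normalized monotone submodular function satisfying the local dependence assumption. Then the Lazy Greedy algorithm for submodular $b$-matching runs in $O(\beta\, m\log m)$ time.
   Context: A $b$-matching is $M\subseteq E$ with $|M\cap\delta(v)|\le b(v)$ for all $v$ ($\delta(v)$ = edges incident to $v$); $v$ is saturated if equality holds; an edge is available w.r.t. $M$ if it is not in $M$ and both its endpoints are unsaturated. Marginal gain: $\rho_e(A)=f(A\cup\{e\})-f(A)$. Local dependence assumption: the marginal gain $\rho_e(A)$ of an edge $e$ depends only on the edges of $A$ adjacent to $e$ (sharing an endpoint with $e$). Lazy Greedy algorithm: start with $M=\emptyset$ and a max-heap containing all edges, each keyed by $f(\{e\})$. While the heap is nonempty: pop the top edge $e$ and recompute its marginal gain $\rho_e(M)$; if $e$ is available, then if $\rho_e(M)$ is at least the key of the current heap top (or the heap is empty) add $e$ to $M$, otherwise push $e$ back with key $\rho_e(M)$; unavailable popped edges are discarded. Running time counts each marginal gain evaluation and availability check as constant time. *)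

theory Defs
  imports Main "HOL-Library.Multiset" Complex_Main
begin

type_synonym vert = nat
type_synonym edge = "vert set"

definition simple_graph :: "vert set \<Rightarrow> edge set \<Rightarrow> bool" where
  "simple_graph V E \<longleftrightarrow> finite V \<and> (\<forall>e\<in>E. \<exists>u\<in>V. \<exists>v\<in>V. u \<noteq> v \<and> e = {u, v})"

definition bmax :: "vert set \<Rightarrow> (vert \<Rightarrow> nat) \<Rightarrow> nat" where
  "bmax V b = Max (insert 0 (b ` V))"

definition marginal :: "(edge set \<Rightarrow> real) \<Rightarrow> edge \<Rightarrow> edge set \<Rightarrow> real" where
  "marginal f e A = f (A \<union> {e}) - f A"

text \<open>Edges of E adjacent to e (sharing an endpoint with e; this includes e itself).\<close>
definition adjacent_edges :: "edge set \<Rightarrow> edge \<Rightarrow> edge set" where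
  "adjacent_edges E e = {e' \<in> E. e' \<inter> e \<noteq> {}}"

definition normalized :: "edge set \<Rightarrow> (edge set \<Rightarrow> real) \<Rightarrow> bool" where
  "normalized E f \<longleftrightarrow> f {} = 0"

definition nonneg_on :: "edge set \<Rightarrow> (edge set \<Rightarrow> real) \<Rightarrow> bool" where
  "nonneg_on E f \<longleftrightarrow> (\<forall>A. A \<subseteq> E \<longrightarrow> 0 \<le> f A)"

definition monotone_on_edges :: "edge set \<Rightarrow> (edge set \<Rightarrow> real) \<Rightarrow> bool" where
  "monotone_on_edges E f \<longleftrightarrow> (\<forall>A B. A \<subseteq> B \<and> B \<subseteq> E \<longrightarrow> f A \<le> f B)"

definition submodular_on :: "edge set \<Rightarrow> (edge set \<Rightarrow> real) \<Rightarrow> bool" where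
  "submodular_on E f \<longleftrightarrow>
     (\<forall>A B. A \<subseteq> E \<and> B \<subseteq> E \<longrightarrow> f (A \<union> B) + f (A \<inter> B) \<le> f A + f B)"

definition local_dependence :: "edge set \<Rightarrow> (edge set \<Rightarrow> real) \<Rightarrow> bool" where
  "local_dependence E f \<longleftrightarrow>
     (\<forall>e A B. e \<in> E \<and> A \<subseteq> E \<and> B \<subseteq> E \<and>
        A \<inter> adjacent_edges E e = B \<inter> adjacent_edges E e \<longrightarrow>
        marginal f e A = marginal f e B)"

definition deg_in :: "edge set \<Rightarrow> vert \<Rightarrow> nat" where
  "deg_in M v = card {e \<in> M. v \<in> e}"

definition unsaturated :: "(vert \<Rightarrow> nat) \<Rightarrow> edge set \<Rightarrow> vert \<Rightarrow> bool" where
  "unsaturated b M v \<longleftrightarrow> deg_in M v < b v"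

definition available :: "(vert \<Rightarrow> nat) \<Rightarrow> edge set \<Rightarrow> edge \<Rightarrow> bool" where
  "available b M e \<longleftrightarrow> e \<notin> M \<and> (\<forall>v\<in>e. unsaturated b M v)"

text \<open>Cost model: each binary-heap
  operation (pop / push) on a heap of size s costs 1 + log2 s; each marginal-gain
  evaluation, availability check and peek at the top key costs 1.\<close>
type_synonym heap = "(edge \<times> real) set"
type_synonym state = "edge set \<times> heap"

definition heap_op_cost :: "nat \<Rightarrow> real" where
  "heap_op_cost s = 1 + log 2 (real s)"

definition top_key :: "heap \<Rightarrow> real" where
  "top_key H = Max (snd ` H)"

inductive lg_step :: "(vert \<Rightarrow> nat) \<Rightarrow> (edge set \<Rightarrow> real) \<Rightarrow> state \<Rightarrow> state \<Rightarrow> real \<Rightarrow> bool"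
  for b f where
  add: "\<lbrakk> (e, k) \<in> H; \<forall>p\<in>H. snd p \<le> k; H0 = H - {(e, k)};
          available b M e; H0 = {} \<or> marginal f e M \<ge> top_key H0 \<rbrakk>
        \<Longrightarrow> lg_step b f (M, H) (M \<union> {e}, H0) (heap_op_cost (card H) + 3)"
| reinsert: "\<lbrakk> (e, k) \<in> H; \<forall>p\<in>H. snd p \<le> k; H0 = H - {(e, k)};
          available b M e; H0 \<noteq> {}; marginal f e M < top_key H0 \<rbrakk>
        \<Longrightarrow> lg_step b f (M, H) (M, insert (e, marginal f e M) H0)
              (heap_op_cost (card H) + 3 + heap_op_cost (card H0 + 1))"
| discard: "\<lbrakk> (e, k) \<in> H; \<forall>p\<in>H. snd p \<le> k; H0 = H - {(e, k)};
          \<not> available b M e \<rbrakk>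
        \<Longrightarrow> lg_step b f (M, H) (M, H0) (heap_op_cost (card H) + 2)"

inductive lg_steps :: "(vert \<Rightarrow> nat) \<Rightarrow> (edge set \<Rightarrow> real) \<Rightarrow> state \<Rightarrow> state \<Rightarrow> real \<Rightarrow> bool"
  for b f where
  refl: "lg_steps b f s s 0"
| step: "\<lbrakk> lg_step b f s s' c; lg_steps b f s' s'' t \<rbrakk> \<Longrightarrow> lg_steps b f s s'' (c + t)"

definition lg_init_heap :: "edge set \<Rightarrow> (edge set \<Rightarrow> real) \<Rightarrow> heap" where
  "lg_init_heap E f = (\<lambda>e. (e, f {e})) ` E"

text \<open>Initialization: m evaluations of f({e}) and m heap insertions.\<close>
definition lg_init_cost :: "edge set \<Rightarrow> real" where
  "lg_init_cost E = real (card E) * (1 + heap_op_cost (card E))"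

end

theory Submission
  imports Defs
begin

definition xcnt :: "edge set \<Rightarrow> edge set \<Rightarrow> edge \<Rightarrow> nat" where
  "xcnt E M e = card (M \<inter> adjacent_edges E e)"

definition pe :: "edge set \<Rightarrow> (edge set \<Rightarrow> real) \<Rightarrow> real \<Rightarrow> edge set \<Rightarrow> edge \<times> real \<Rightarrow> real" where
  "pe E f \<beta> M q = 1 + 2 * (2 * \<beta> - real (xcnt E M (fst q)))
     + (if snd q = marginal f (fst q) M then 0 else 1)"

definition pot :: "edge set \<Rightarrow> (edge set \<Rightarrow> real) \<Rightarrow> real \<Rightarrow> edge set \<Rightarrow> heap \<Rightarrow> real" where
  "pot E f \<beta> M H = (\<Sum>q\<in>H. pe E f \<beta> M q)"

definition lg_inv :: "edge set \<Rightarrow> (vert \<Rightarrow> nat) \<Rightarrow> edge set \<Rightarrow> heap \<Rightarrow> bool" where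
  "lg_inv E b M H \<longleftrightarrow> finite H \<and> fst ` H \<subseteq> E \<and> inj_on fst H \<and> M \<subseteq> E \<and> (\<forall>v. deg_in M v \<le> b v)"

lemma finite_E:
  assumes "simple_graph V E" shows "finite E"
proof -
  have "E \<subseteq> Pow V"
  proof
    fix e assume "e \<in> E"
    then obtain u v where "u \<in> V" "v \<in> V" "e = {u, v}" using assms unfolding simple_graph_def by blast
    then show "e \<in> Pow V" by simp
  qed
  moreover have "finite V" using assms unfolding simple_graph_def by blast
  ultimately show ?thesis using finite_subset by blast
qed

lemma xcnt_le:
  assumes G: "simple_graph V E" and e: "e \<in> E" and M: "M \<subseteq> E"
    and D: "\<forall>v. deg_in M v \<le> b v"
  shows "xcnt E M e \<le> 2 * bmax V b"
proof -
  obtain u v where uv: "u \<in> V" "v \<in> V" "e = {u, v}" using G e unfolding simple_graph_def by blast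
  have fE: "finite E" using finite_E[OF G] .
  have fM: "finite M" using M fE rev_finite_subset by blast
  have sub: "M \<inter> adjacent_edges E e \<subseteq> {e' \<in> M. u \<in> e'} \<union> {e' \<in> M. v \<in> e'}"
    unfolding adjacent_edges_def using uv by blast
  have "xcnt E M e \<le> card ({e' \<in> M. u \<in> e'} \<union> {e' \<in> M. v \<in> e'})"
    unfolding xcnt_def by (rule card_mono) (use fM sub in auto)
  also have "\<dots> \<le> card {e' \<in> M. u \<in> e'} + card {e' \<in> M. v \<in> e'}" by (rule card_Un_le)
  also have "\<dots> = deg_in M u + deg_in M v" unfolding deg_in_def by simp
  also have "\<dots> \<le> b u + b v" using D by (simp add: add_mono)
  also have "\<dots> \<le> bmax V b + bmax V b"
  proof -
    have fV: "finite V" using G unfolding simple_graph_def by blast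
    have "b u \<le> bmax V b" "b v \<le> bmax V b" unfolding bmax_def using uv fV by auto
    then show ?thesis by simp
  qed
  finally show ?thesis by simp
qed

lemma pe_ge1:
  assumes "xcnt E M (fst q) \<le> 2 * bmax V b"
  shows "1 \<le> pe E f (real (bmax V b)) M q"
proof -
  have "real (xcnt E M (fst q)) \<le> 2 * real (bmax V b)" using assms by linarith
  then show ?thesis unfolding pe_def by auto
qed

lemma pe_le:
  shows "pe E f \<beta> M q \<le> 4 * \<beta> + 2"
  unfolding pe_def by auto

lemma pe_mono:
  assumes G: "simple_graph V E" and LD: "local_dependence E f"
    and q: "fst q \<in> E" and M: "M \<subseteq> E" and e: "e \<in> E"
    and D: "\<forall>v. deg_in (M \<union> {e}) v \<le> b v"
  shows "pe E f (real (bmax V b)) (M \<union> {e}) q \<le> pe E f (real (bmax V b)) M q"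
proof -
  have fE: "finite E" using finite_E[OF G] .
  let ?A = "M \<inter> adjacent_edges E (fst q)"
  let ?B = "(M \<union> {e}) \<inter> adjacent_edges E (fst q)"
  have AB: "?A \<subseteq> ?B" by auto
  have "?B \<subseteq> E" using M e by blast
  then have fB: "finite ?B" using fE finite_subset by blast
  have cle: "card ?A \<le> card ?B" using card_mono[OF fB AB] .
  have Bb: "xcnt E (M \<union> {e}) (fst q) \<le> 2 * bmax V b"
    using xcnt_le[OF G q _ D] M e by blast
  show ?thesis
  proof (cases "card ?A = card ?B")
    case True
    then have "?A = ?B" using card_subset_eq[OF fB AB] by simp
    then have "?B \<inter> adjacent_edges E (fst q) = M \<inter> adjacent_edges E (fst q)" by auto
    moreover have "M \<union> {e} \<subseteq> E" using M e by blast
    ultimately have "marginal f (fst q) (M \<union> {e}) = marginal f (fst q) M"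
      using LD[unfolded local_dependence_def, rule_format, of "fst q" "M \<union> {e}" M] q M
      by blast
    then show ?thesis unfolding pe_def xcnt_def using True by simp
  next
    case False
    then have "card ?A + 1 \<le> card ?B" using cle by linarith
    then have "real (xcnt E M (fst q)) + 1 \<le> real (xcnt E (M \<union> {e}) (fst q))"
      unfolding xcnt_def by linarith
    then show ?thesis unfolding pe_def by simp
  qed
qed

lemma step_lemma:
  assumes G: "simple_graph V E" and LD: "local_dependence E f"
    and I: "lg_inv E b M H" and S: "lg_step b f (M, H) (M', H') c"
  shows "lg_inv E b M' H' \<and> pot E f (real (bmax V b)) M' H' + 1 \<le> pot E f (real (bmax V b)) M H
     \<and> 0 \<le> c \<and> c \<le> 5 + 2 * log 2 (real (card E))"
proof -
  let ?\<beta> = "real (bmax V b)"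
  have fH: "finite H" and fstH: "fst ` H \<subseteq> E" and injH: "inj_on fst H" and ME: "M \<subseteq> E"
    and D: "\<forall>v. deg_in M v \<le> b v" using I unfolding lg_inv_def by auto
  have fE: "finite E" using finite_E[OF G] .
  have pe1: "1 \<le> pe E f ?\<beta> M q" if "q \<in> H" for q
    using pe_ge1 xcnt_le[OF G _ ME D] fstH that by blast
  have cardH: "card H \<le> card E"
    using card_image[OF injH] card_mono[OF fE fstH] by simp
  have hc: "0 \<le> heap_op_cost (card H) \<and> heap_op_cost (card H) \<le> 1 + log 2 (real (card E)) \<and> 0 \<le> log 2 (real (card E))"
    if "H \<noteq> {}"
  proof -
    have "1 \<le> card H" using that fH by (simp add: Suc_leI card_gt_0_iff)
    then have "0 \<le> log 2 (real (card H))" by simp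
    moreover have "log 2 (real (card H)) \<le> log 2 (real (card E))"
      using \<open>1 \<le> card H\<close> cardH by simp
    moreover have "0 \<le> log 2 (real (card E))" using \<open>1 \<le> card H\<close> cardH by simp
    ultimately show ?thesis unfolding heap_op_cost_def by simp
  qed
  from S show ?thesis
  proof (cases rule: lg_step.cases)
    case (add e k)
    have eH: "(e, k) \<in> H" using add by simp
    have eE: "e \<in> E" using eH fstH by force
    have av: "available b M e" using add by simp
    have D': "\<forall>v. deg_in (M \<union> {e}) v \<le> b v"
    proof
      fix v
      show "deg_in (M \<union> {e}) v \<le> b v"
      proof (cases "v \<in> e")
        case True
        have fM: "finite M" using ME fE rev_finite_subset by blast
        have "{x \<in> M \<union> {e}. v \<in> x} = insert e {x \<in> M. v \<in> x}" using True by auto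
        then have "deg_in (M \<union> {e}) v \<le> deg_in M v + 1"
          unfolding deg_in_def using fM by (simp add: card_insert_if)
        moreover have "deg_in M v < b v" using av True unfolding available_def unsaturated_def by blast
        ultimately show ?thesis by simp
      next
        case False
        have "{x \<in> M \<union> {e}. v \<in> x} = {x \<in> M. v \<in> x}" using False by auto
        then show ?thesis using D unfolding deg_in_def by simp
      qed
    qed
    have inv': "lg_inv E b M' H'"
    proof -
      have "finite H'" using add fH by simp
      moreover have "fst ` H' \<subseteq> E" using add fstH by blast
      moreover have "inj_on fst H'" using add injH inj_on_subset by (metis Diff_subset)
      moreover have "M' \<subseteq> E" using add ME eE by simp
      moreover have "\<forall>v. deg_in M' v \<le> b v" using add D' by simp
      ultimately show ?thesis unfolding lg_inv_def by blast
    qed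
    have "pot E f ?\<beta> M' H' = (\<Sum>q\<in>H - {(e,k)}. pe E f ?\<beta> (M \<union> {e}) q)"
      unfolding pot_def using add by simp
    also have "\<dots> \<le> (\<Sum>q\<in>H - {(e,k)}. pe E f ?\<beta> M q)"
      by (rule sum_mono, rule pe_mono[OF G LD _ ME eE D']) (use fstH in auto)
    also have "\<dots> = pot E f ?\<beta> M H - pe E f ?\<beta> M (e,k)"
      unfolding pot_def using sum.remove[OF fH eH, of "pe E f ?\<beta> M"] by linarith
    finally have "pot E f ?\<beta> M' H' + 1 \<le> pot E f ?\<beta> M H" using pe1[OF eH] by simp
    moreover have "0 \<le> c \<and> c \<le> 5 + 2 * log 2 (real (card E))"
    proof -
      have "H \<noteq> {}" using eH by blast
      then have "0 \<le> heap_op_cost (card H) \<and> heap_op_cost (card H) \<le> 1 + log 2 (real (card E)) \<and> 0 \<le> log 2 (real (card E))" using hc by blast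
      moreover have "c = heap_op_cost (card H) + 3" using add by simp
      ultimately show ?thesis by linarith
    qed
    ultimately show ?thesis using inv' by simp
  next
    case (reinsert e k)
    have eH: "(e, k) \<in> H" using reinsert by simp
    let ?H0 = "H - {(e,k)}"
    let ?mg = "marginal f e M"
    have eE: "e \<in> E" using eH fstH by force
    have notin: "e \<notin> fst ` ?H0"
    proof
      assume "e \<in> fst ` ?H0"
      then obtain q where q: "q \<in> H" "q \<noteq> (e,k)" "fst q = e" by force
      then show False using injH eH unfolding inj_on_def by force
    qed
    have inv': "lg_inv E b M' H'"
    proof -
      have "finite H'" using reinsert fH by simp
      moreover have "fst ` H' \<subseteq> E" using reinsert fstH eE by auto
      moreover have "inj_on fst ?H0" using injH inj_on_subset by (metis Diff_subset)
      then have "inj_on fst (insert (e, ?mg) ?H0)" using notin by (simp add: inj_on_insert) blast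
      then have "inj_on fst H'" using reinsert by simp
      moreover have "M' \<subseteq> E" using reinsert ME by simp
      moreover have "\<forall>v. deg_in M' v \<le> b v" using reinsert D by simp
      ultimately show ?thesis unfolding lg_inv_def by blast
    qed
    have "top_key ?H0 \<le> k"
    proof -
      have "finite (snd ` ?H0)" using fH by simp
      moreover have "snd ` ?H0 \<noteq> {}" using reinsert by simp
      ultimately show ?thesis unfolding top_key_def using reinsert by (auto simp: Max_le_iff)
    qed
    then have kne: "k \<noteq> ?mg" using reinsert by simp
    have "pot E f ?\<beta> M' H' = (\<Sum>q\<in>insert (e, ?mg) ?H0. pe E f ?\<beta> M q)"
      unfolding pot_def using reinsert by simp
    also have "\<dots> \<le> pe E f ?\<beta> M (e, ?mg) + (\<Sum>q\<in>?H0. pe E f ?\<beta> M q)"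
    proof (cases "(e, ?mg) \<in> ?H0")
      case True
      then have "1 \<le> pe E f ?\<beta> M (e, ?mg)" using pe1 by blast
      then show ?thesis using True by (simp add: insert_absorb)
    next
      case False
      then show ?thesis using fH by simp
    qed
    also have "\<dots> = pe E f ?\<beta> M (e, ?mg) + pot E f ?\<beta> M H - pe E f ?\<beta> M (e,k)"
      unfolding pot_def using sum.remove[OF fH eH, of "pe E f ?\<beta> M"] by linarith
    also have "\<dots> = pot E f ?\<beta> M H - 1"
      unfolding pe_def using kne by simp
    finally have "pot E f ?\<beta> M' H' + 1 \<le> pot E f ?\<beta> M H" by simp
    moreover have "0 \<le> c \<and> c \<le> 5 + 2 * log 2 (real (card E))"
    proof -
      have "card ?H0 + 1 = card H" using fH eH
        by (metis Suc_eq_plus1 card_Suc_Diff1)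
      moreover have "H \<noteq> {}" using eH by blast
      ultimately have hh: "0 \<le> heap_op_cost (card H) \<and> heap_op_cost (card H) \<le> 1 + log 2 (real (card E)) \<and> 0 \<le> log 2 (real (card E))"
        and cc: "card ?H0 + 1 = card H" using hc by blast+
      have "c = heap_op_cost (card H) + 3 + heap_op_cost (card ?H0 + 1)" using reinsert by simp
      then have "c = heap_op_cost (card H) + 3 + heap_op_cost (card H)" using cc by simp
      then show ?thesis using hh by linarith
    qed
    ultimately show ?thesis using inv' by simp
  next
    case (discard e k)
    have eH: "(e, k) \<in> H" using discard by simp
    have inv': "lg_inv E b M' H'"
    proof -
      have "finite H'" using discard fH by simp
      moreover have "fst ` H' \<subseteq> E" using discard fstH by blast
      moreover have "inj_on fst H'" using discard injH inj_on_subset by (metis Diff_subset)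
      moreover have "M' \<subseteq> E" using discard ME by simp
      moreover have "\<forall>v. deg_in M' v \<le> b v" using discard D by simp
      ultimately show ?thesis unfolding lg_inv_def by blast
    qed
    have "pot E f ?\<beta> M' H' = pot E f ?\<beta> M H - pe E f ?\<beta> M (e,k)"
      unfolding pot_def using discard sum.remove[OF fH eH, of "pe E f ?\<beta> M"] by simp
    then have "pot E f ?\<beta> M' H' + 1 \<le> pot E f ?\<beta> M H" using pe1[OF eH] by simp
    moreover have "0 \<le> c \<and> c \<le> 5 + 2 * log 2 (real (card E))"
    proof -
      have "H \<noteq> {}" using eH by blast
      then have "0 \<le> heap_op_cost (card H) \<and> heap_op_cost (card H) \<le> 1 + log 2 (real (card E)) \<and> 0 \<le> log 2 (real (card E))" using hc by blast
      moreover have "c = heap_op_cost (card H) + 2" using discard by simp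
      ultimately show ?thesis by linarith
    qed
    ultimately show ?thesis using inv' by simp
  qed
qed

lemma steps_lemma:
  assumes "lg_steps b f s s' t"
    and G: "simple_graph V E" and LD: "local_dependence E f"
  shows "lg_inv E b (fst s) (snd s) \<Longrightarrow>
    t \<le> pot E f (real (bmax V b)) (fst s) (snd s) * (5 + 2 * log 2 (real (card E)))"
  using assms(1)
proof (induction rule: lg_steps.induct)
  case (refl s)
  have "0 \<le> pot E f (real (bmax V b)) (fst s) (snd s)"
    unfolding pot_def
  proof (rule sum_nonneg)
    fix q assume "q \<in> snd s"
    then show "0 \<le> pe E f (real (bmax V b)) (fst s) q"
      using refl pe_ge1 xcnt_le[OF G] unfolding lg_inv_def
      by (smt (verit, best) image_subset_iff)
  qed
  moreover have "0 \<le> 5 + 2 * log 2 (real (card E))"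
  proof (cases "card E = 0")
    case True then show ?thesis by (simp add: log_def)
  next
    case False then show ?thesis by simp
  qed
  ultimately show ?case by simp
next
  case (step s s' c s'' t)
  obtain M H where s: "s = (M, H)" by fastforce
  obtain M' H' where s': "s' = (M', H')" by fastforce
  have st: "lg_inv E b M' H' \<and> pot E f (real (bmax V b)) M' H' + 1 \<le> pot E f (real (bmax V b)) M H
     \<and> 0 \<le> c \<and> c \<le> 5 + 2 * log 2 (real (card E))"
    using step_lemma[OF G LD _ ] step s s' by simp
  let ?K = "5 + 2 * log 2 (real (card E))"
  have "t \<le> pot E f (real (bmax V b)) M' H' * ?K" using step st s' by simp
  moreover have "(pot E f (real (bmax V b)) M' H' + 1) * ?K \<le> pot E f (real (bmax V b)) M H * ?K"
    using st by (intro mult_right_mono) auto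
  ultimately show ?case using st s by (simp add: algebra_simps)
qed

theorem lemma1:
  "\<exists>C::real. \<forall>(V::vert set) (E::edge set) (b::vert \<Rightarrow> nat) (f::edge set \<Rightarrow> real).
     simple_graph V E \<and> nonneg_on E f \<and> normalized E f \<and> monotone_on_edges E f \<and>
     submodular_on E f \<and> local_dependence E f \<longrightarrow>
     (\<forall>s t. lg_steps b f ({}, lg_init_heap E f) s t \<longrightarrow>
        lg_init_cost E + t \<le>
          C * real (max 1 (bmax V b)) * real (card E) * log 2 (real (card E) + 1))"
proof (intro exI[of _ 45] allI impI, elim conjE)
  fix V :: "vert set" and E :: "edge set" and b :: "vert \<Rightarrow> nat" and f :: "edge set \<Rightarrow> real" and s t
  assume G: "simple_graph V E" and LD: "local_dependence E f"
    and S: "lg_steps b f ({}, lg_init_heap E f) s t"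
  let ?\<beta> = "real (bmax V b)"
  let ?B = "real (max 1 (bmax V b))"
  let ?m = "real (card E)"
  let ?L = "log 2 (real (card E) + 1)"
  let ?K = "5 + 2 * log 2 (real (card E))"
  let ?H = "lg_init_heap E f"
  have fE: "finite E" using finite_E[OF G] .
  have inv0: "lg_inv E b {} ?H"
    unfolding lg_inv_def lg_init_heap_def deg_in_def using fE by (auto simp: inj_on_def)
  have tle: "t \<le> pot E f ?\<beta> {} ?H * ?K"
    using steps_lemma[OF S G LD] inv0 by simp
  have pot_le: "pot E f ?\<beta> {} ?H \<le> ?m * (4 * ?\<beta> + 2)"
  proof -
    have "pot E f ?\<beta> {} ?H \<le> real (card ?H) * (4 * ?\<beta> + 2)"
      unfolding pot_def using sum_bounded_above[of ?H "pe E f ?\<beta> {}" "4 * ?\<beta> + 2"] pe_le by simp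
    also have "\<dots> \<le> ?m * (4 * ?\<beta> + 2)"
      unfolding lg_init_heap_def by (intro mult_right_mono) (auto simp: card_image_le fE)
    finally show ?thesis .
  qed
  have pot_nn: "0 \<le> pot E f ?\<beta> {} ?H"
    unfolding pot_def
  proof (rule sum_nonneg)
    fix q assume "q \<in> ?H"
    then show "0 \<le> pe E f ?\<beta> {} q"
      using inv0 pe_ge1 xcnt_le[OF G] unfolding lg_inv_def
      by (smt (verit, best) image_subset_iff)
  qed
  show "lg_init_cost E + t \<le> 45 * ?B * ?m * ?L"
  proof (cases "card E = 0")
    case True
    then have "E = {}" using fE by simp
    then have "?H = {}" unfolding lg_init_heap_def by simp
    then have "t \<le> 0" using tle unfolding pot_def by simp
    then show ?thesis using True unfolding lg_init_cost_def by simp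
  next
    case False
    then have m1: "1 \<le> ?m" by simp
    have L1: "1 \<le> ?L" using m1 by simp
    have logm: "log 2 ?m \<le> ?L" using m1 by simp
    have logm0: "0 \<le> log 2 ?m" using m1 by simp
    have K7: "?K \<le> 7 * ?L" using logm L1 by linarith
    have B1: "1 \<le> ?B" by simp
    have bB: "?\<beta> \<le> ?B" by simp
    have b0: "0 \<le> ?\<beta>" by simp
    have "t \<le> ?m * (4 * ?\<beta> + 2) * ?K"
      using tle pot_le logm0 by (smt (verit) mult_right_mono)
    also have "\<dots> \<le> ?m * (6 * ?B) * (7 * ?L)"
      by (intro mult_mono) (use bB B1 K7 m1 logm0 b0 in auto)
    finally have t1: "t \<le> 42 * ?B * ?m * ?L" by (simp add: algebra_simps)
    have "lg_init_cost E = ?m * (2 + log 2 ?m)"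
      unfolding lg_init_cost_def heap_op_cost_def by simp
    also have "\<dots> \<le> ?m * (3 * ?L)"
      using logm L1 m1 by (intro mult_left_mono) linarith+
    also have "\<dots> \<le> ?B * ?m * (3 * ?L)"
      using B1 m1 L1 by (simp add: mult_left_mono)
    finally have i1: "lg_init_cost E \<le> 3 * ?B * ?m * ?L" by (simp add: algebra_simps)
    show ?thesis using t1 i1 by (simp add: algebra_simps)
  qed
qed

end
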